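(* Let $\mathbb T=\mathbb R/2\pi\mathbb Z$ with normalized Lebesgue measure $dx$. Let $\rho$ be a smooth strictly positive probability density on $\mathbb T$, let $(t,x)\mapsto\phi_t(x)$ be smooth on $[0,1]\times\mathbb T$, let $X_t$ be the flow of $\frac{dX_t}{dt}=\partial_x\phi_t(X_t)$, $X_0=\mathrm{id}$, and let $\rho_t$ be the density of $(X_t)_\#(\rho\,dx)$. For $f\in L^2(\rho\,dx)$ set $$\Lambda(t,f)=-\Big(\int_{\mathbb T}f\,\frac{\partial_x^2\phi_t}{\rho_t}(X_t)\,\rho\,dx\Big)\hat\rho_t(X_t),\qquad \hat\rho_t=\frac{1}{\big(\int_{\mathbb T}\frac{dx}{\rho_t}\big)\rho_t}.$$ Then for all $t\in[0,1]$ and $f,g\in L^2(\rho\,dx)$, $$\|\Lambda(t,f)-\Lambda(t,g)\|_{L^2(\rho dx)}\le\Big(\sup_{t\in[0,1]}\|\partial_x^2\phi_t\|_\infty\Big)\|f-g\|_{L^2(\rho dx)}.$$ *)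

theory Defs
  imports "HOL-Analysis.Analysis"
begin

fun Ck_on :: "nat \<Rightarrow> ('a::real_normed_vector \<Rightarrow> real) \<Rightarrow> 'a set \<Rightarrow> bool" where
  "Ck_on 0 f U = continuous_on U f"
| "Ck_on (Suc k) f U =
     (\<exists>f'. (\<forall>z\<in>U. (f has_derivative f' z) (at z)) \<and> (\<forall>h. Ck_on k (\<lambda>z. f' z h) U))"

definition smooth_on :: "'a::real_normed_vector set \<Rightarrow> ('a \<Rightarrow> real) \<Rightarrow> bool" where
  "smooth_on S f \<longleftrightarrow> (\<exists>U. open U \<and> S \<subseteq> U \<and> (\<forall>k. Ck_on k f U))"

text \<open>The circle T = R/2piZ: functions on T are 2pi-periodic functions on R;
  normalized Lebesgue measure dx/(2pi) on the fundamental domain [0,2pi).\<close>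
definition periodic2pi :: "(real \<Rightarrow> 'b) \<Rightarrow> bool" where
  "periodic2pi f \<longleftrightarrow> (\<forall>x. f (x + 2*pi) = f x)"

definition T_meas :: "real measure" where
  "T_meas = density (restrict_space lborel {0..<2*pi}) (\<lambda>x. ennreal (1 / (2*pi)))"

definition projT :: "real \<Rightarrow> real" where
  "projT x = x - 2*pi * of_int \<lfloor>x / (2*pi)\<rfloor>"

definition rho_meas :: "(real \<Rightarrow> real) \<Rightarrow> real measure" where
  "rho_meas \<rho> = density T_meas (\<lambda>x. ennreal (\<rho> x))"

definition L2_rho :: "(real \<Rightarrow> real) \<Rightarrow> (real \<Rightarrow> real) set" where
  "L2_rho \<rho> = {f. f \<in> borel_measurable (rho_meas \<rho>) \<and> integrable (rho_meas \<rho>) (\<lambda>x. (f x)\<^sup>2)}"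

definition L2_norm_rho :: "(real \<Rightarrow> real) \<Rightarrow> (real \<Rightarrow> real) \<Rightarrow> real" where
  "L2_norm_rho \<rho> u = sqrt (\<integral>x. (u x)\<^sup>2 \<partial>rho_meas \<rho>)"

definition rho_hat :: "(real \<Rightarrow> real) \<Rightarrow> real \<Rightarrow> real" where
  "rho_hat r y = 1 / ((\<integral>z. 1 / r z \<partial>T_meas) * r y)"

definition Lambda ::
  "(real \<Rightarrow> real) \<Rightarrow> (real \<Rightarrow> real \<Rightarrow> real) \<Rightarrow> (real \<Rightarrow> real \<Rightarrow> real) \<Rightarrow> (real \<Rightarrow> real \<Rightarrow> real)
     \<Rightarrow> real \<Rightarrow> (real \<Rightarrow> real) \<Rightarrow> real \<Rightarrow> real" where
  "Lambda \<rho> \<phi> X rt t f =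
     (\<lambda>x. - (\<integral>z. f z * (deriv (deriv (\<phi> t)) (X t z) / rt t (X t z)) \<partial>rho_meas \<rho>)
           * rho_hat (rt t) (X t x))"

end

theory Submission
  imports Defs
begin


lemma per_nat: "periodic2pi k \<Longrightarrow> k (y + 2*pi*real n) = k y"
proof (induction n arbitrary: y)
  case 0 then show ?case by simp
next
  case (Suc n)
  have "k (y + 2*pi*real (Suc n)) = k ((y + 2*pi*real n) + 2*pi)" by (simp add: algebra_simps)
  also have "\<dots> = k (y + 2*pi*real n)" using Suc.prems by (simp add: periodic2pi_def)
  finally show ?case using Suc by simp
qed

lemma per_int: assumes p: "periodic2pi k" shows "k (y + 2*pi*real_of_int n) = k y"
proof (cases "n \<ge> 0")
  case True
  then obtain m where "n = int m" by (metis nonneg_eq_int)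
  then show ?thesis using per_nat[OF p, of y m] by simp
next
  case False
  define m where "m = nat (-n)"
  have m: "n = - int m" using False by (simp add: m_def)
  have "k y = k ((y - 2*pi*real m) + 2*pi*real m)" by simp
  also have "\<dots> = k (y - 2*pi*real m)" using per_nat[OF p, of "y - 2*pi*real m" m] by simp
  finally show ?thesis using m by simp
qed

lemma projT_per: "periodic2pi k \<Longrightarrow> k (projT y) = k y"
  unfolding projT_def using per_int[of k y "- \<lfloor>y/(2*pi)\<rfloor>"] by simp

lemma projT_range: "projT y \<in> {0..<2*pi}"
proof -
  have a: "of_int \<lfloor>y/(2*pi)\<rfloor> \<le> y/(2*pi)" by (rule of_int_floor_le)
  have b: "y/(2*pi) < of_int \<lfloor>y/(2*pi)\<rfloor> + 1" by (rule real_of_int_floor_add_one_gt)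
  have p: "2*pi > 0" by simp
  from mult_left_mono[OF a, of "2*pi"] have "2*pi*real_of_int \<lfloor>y/(2*pi)\<rfloor> \<le> y" using p by simp
  moreover from b have "y < 2*pi*real_of_int \<lfloor>y/(2*pi)\<rfloor> + 2*pi" using p by (simp add: field_simps)
  ultimately show ?thesis unfolding projT_def by auto
qed

lemma projT_borel: "projT \<in> borel_measurable borel"
  unfolding projT_def by measurable

lemma deriv_per: "periodic2pi k \<Longrightarrow> periodic2pi (deriv k)"
proof -
  assume p: "periodic2pi k"
  have e: "(\<lambda>x. k (x + 2*pi)) = k" using p by (simp add: periodic2pi_def)
  show ?thesis unfolding periodic2pi_def deriv_def
    by (subst DERIV_shift) (simp add: e)
qed

lemma CS_int:
  fixes v w :: "'a \<Rightarrow> real"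
  assumes iv: "integrable M (\<lambda>x. (v x)\<^sup>2)" and iw: "integrable M (\<lambda>x. (w x)\<^sup>2)"
    and ivw: "integrable M (\<lambda>x. v x * w x)"
  shows "(\<integral>x. v x * w x \<partial>M)\<^sup>2 \<le> (\<integral>x. (v x)\<^sup>2 \<partial>M) * (\<integral>x. (w x)\<^sup>2 \<partial>M)"
proof -
  define A where "A = (\<integral>x. (v x)\<^sup>2 \<partial>M)"
  define B where "B = (\<integral>x. (w x)\<^sup>2 \<partial>M)"
  define C where "C = (\<integral>x. v x * w x \<partial>M)"
  have key: "0 \<le> A - 2*l*C + l\<^sup>2 * B" for l
  proof -
    have "0 \<le> (\<integral>x. (v x - l * w x)\<^sup>2 \<partial>M)" by simp
    also have "(\<integral>x. (v x - l * w x)\<^sup>2 \<partial>M) = (\<integral>x. (v x)\<^sup>2 - 2*l*(v x * w x) + l\<^sup>2 * (w x)\<^sup>2 \<partial>M)"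
      by (rule Bochner_Integration.integral_cong) (auto simp: power2_eq_square algebra_simps)
    also have "\<dots> = A - 2*l*C + l\<^sup>2 * B"
      using iv iw ivw by (simp add: A_def B_def C_def)
    finally show ?thesis .
  qed
  have B0: "B \<ge> 0" unfolding B_def by simp
  show ?thesis
  proof (cases "B = 0")
    case True
    have "C = 0"
    proof (rule ccontr)
      assume "C \<noteq> 0"
      have "0 \<le> A - 2*((A+1)/(2*C))*C" using key[of "(A+1)/(2*C)"] True by simp
      also have "\<dots> = -1" using \<open>C \<noteq> 0\<close> by (simp add: field_simps)
      finally show False by simp
    qed
    then show ?thesis using True by (simp add: A_def B_def C_def)
  next
    case False
    then have Bp: "B > 0" using B0 by simp
    have "0 \<le> A - 2*(C/B)*C + (C/B)\<^sup>2 * B" by (rule key)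
    also have "\<dots> = A - C\<^sup>2/B" using Bp by (simp add: field_simps power2_eq_square)
    finally have "C\<^sup>2 / B \<le> A" by simp
    then have "C\<^sup>2 \<le> A * B" using Bp by (simp add: field_simps)
    then show ?thesis by (simp add: A_def B_def C_def)
  qed
qed

lemma lip_MVT:
  fixes h h' :: "real \<Rightarrow> real"
  assumes d: "\<And>x. (h has_real_derivative h' x) (at x)" and b: "\<And>x. \<bar>h' x\<bar> \<le> L"
  shows "\<bar>h a - h b\<bar> \<le> L * \<bar>a - b\<bar>"
proof -
  have *: "\<bar>h q - h p\<bar> \<le> L * (q - p)" if pq: "p < q" for p q
  proof -
    obtain z where "h q - h p = (q - p) * h' z" using MVT2[of p q h h', OF pq] d by blast
    then have "\<bar>h q - h p\<bar> = (q - p) * \<bar>h' z\<bar>" using pq by (simp add: abs_mult)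
    also have "\<dots> \<le> (q - p) * L" using b[of z] pq by (intro mult_left_mono) auto
    finally show ?thesis by (simp add: mult.commute)
  qed
  consider "a < b" | "a = b" | "b < a" by linarith
  then show ?thesis
  proof cases
    case 1 then show ?thesis using *[OF 1] by (simp add: abs_minus_commute)
  next
    case 2 then show ?thesis by simp
  next
    case 3 then show ?thesis using *[OF 3] by simp
  qed
qed



lemma partial2:
  fixes G :: "real \<times> real \<Rightarrow> real"
  assumes "(G has_derivative G') (at (s, y))"
  shows "((\<lambda>x. G (s, x)) has_real_derivative G' (0, 1)) (at y)"
proof -
  have p: "((\<lambda>x. (s, x)) has_derivative (\<lambda>v. (0, v))) (at y)"
    by (auto intro!: derivative_eq_intros)
  have c: "((G \<circ> (\<lambda>x. (s, x))) has_derivative (G' \<circ> (\<lambda>v. (0, v)))) (at y)"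
    using diff_chain_at[OF p assms] by simp
  have bl: "linear G'" using assms by (simp add: has_derivative_bounded_linear bounded_linear.linear)
  have e: "(G' \<circ> (\<lambda>v. (0, v))) = (\<lambda>v. G' (0, 1) * v)"
  proof
    fix v :: real
    have "(0::real, v) = v *\<^sub>R (0, 1)" by simp
    then show "(G' \<circ> (\<lambda>v. (0, v))) v = G' (0, 1) * v"
      using linear_scale[OF bl, of v "(0,1)"] by (simp add: mult.commute)
  qed
  show ?thesis unfolding has_field_derivative_def using c e by (simp add: o_def)
qed

lemma phi_reg:
  fixes \<phi> :: "real \<Rightarrow> real \<Rightarrow> real"
  assumes "smooth_on ({0..1} \<times> UNIV) (\<lambda>(t, x). \<phi> t x)"
  shows "\<exists>P1 P2. continuous_on ({0..1} \<times> UNIV) P2 \<and>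
     (\<forall>s\<in>{0..1}. \<forall>y. (\<phi> s has_real_derivative P1 (s,y)) (at y) \<and>
          ((\<lambda>y. P1 (s,y)) has_real_derivative P2 (s,y)) (at y))"
proof -
  obtain U where U: "open U" "{0..1} \<times> UNIV \<subseteq> U" "\<And>k. Ck_on k (\<lambda>(t, x). \<phi> t x) U"
    using assms unfolding smooth_on_def by blast
  from U(3)[of "Suc (Suc 0)"] obtain F1 where
    F1: "\<forall>z\<in>U. ((\<lambda>(t, x). \<phi> t x) has_derivative F1 z) (at z)"
    and F1c: "\<forall>h. Ck_on (Suc 0) (\<lambda>z. F1 z h) U" by auto
  from F1c[rule_format, of "(0,1)"] obtain F2 where
    F2: "\<forall>z\<in>U. ((\<lambda>z. F1 z (0,1)) has_derivative F2 z) (at z)"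
    and F2c: "\<forall>h. continuous_on U (\<lambda>z. F2 z h)" by auto
  show ?thesis
  proof (intro exI conjI ballI allI)
    show "continuous_on ({0..1} \<times> UNIV) (\<lambda>z. F2 z (0,1))"
      using F2c continuous_on_subset U(2) by blast
  next
    fix s y :: real assume s: "s \<in> {0..1}"
    then have "(s,y) \<in> U" using U(2) by auto
    then show "(\<phi> s has_real_derivative F1 (s,y) (0,1)) (at y)"
      "((\<lambda>y. F1 (s,y) (0,1)) has_real_derivative F2 (s,y) (0,1)) (at y)"
      using partial2[of "\<lambda>(t, x). \<phi> t x"] partial2[of "\<lambda>z. F1 z (0,1)"] F1 F2 by auto
  qed
qed



lemma flow_mono:
  fixes X :: "real \<Rightarrow> real \<Rightarrow> real" and V :: "real \<Rightarrow> real \<Rightarrow> real"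
  assumes flow: "\<And>x s. s \<in> {0..1} \<Longrightarrow> ((\<lambda>s. X s x) has_real_derivative V s (X s x)) (at s within {0..1})"
    and lip: "\<And>s a b. s \<in> {0..1} \<Longrightarrow> \<bar>V s a - V s b\<bar> \<le> L * \<bar>a - b\<bar>"
    and flow0: "\<And>x. X 0 x = x" and t: "t \<in> {0..1}"
  shows "mono (X t)"
proof (rule monoI)
  fix x y :: real assume xy: "x \<le> y"
  show "X t x \<le> X t y"
  proof (cases "x = y")
    case True then show ?thesis by simp
  next
    case False
    with xy have xy: "x < y" by simp
    have L0: "0 \<le> L" using lip[of 0 1 0] by simp
    define d where "d s = X s y - X s x" for s
    define d' where "d' s = V s (X s y) - V s (X s x)" for s
    have Hd: "(d has_real_derivative d' s) (at s within {0..1})" if "s \<in> {0..1}" for s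
      unfolding d_def d'_def using flow[OF that, of y] flow[OF that, of x] by (rule DERIV_diff)
    have bd: "\<bar>d' s\<bar> \<le> L * \<bar>d s\<bar>" if "s \<in> {0..1}" for s
      unfolding d_def d'_def using lip[OF that] by simp
    define w where "w s = exp (2 * L * s) * (d s)\<^sup>2" for s
    define w' where "w' s = (2 * L) * exp (2 * L * s) * (d s)\<^sup>2 + exp (2 * L * s) * (2 * d s * d' s)" for s
    have Hw: "(w has_real_derivative w' s) (at s within {0..1})" if "s \<in> {0..1}" for s
    proof -
      have e: "((\<lambda>s. exp (2 * L * s)) has_real_derivative (2 * L) * exp (2 * L * s)) (at s within {0..1})"
        by (auto intro!: derivative_eq_intros)
      have q: "((\<lambda>s. (d s)\<^sup>2) has_real_derivative 2 * d s * d' s) (at s within {0..1})"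
        using DERIV_power[OF Hd[OF that], of 2] by (simp add: power2_eq_square algebra_simps)
      show ?thesis unfolding w_def w'_def using DERIV_mult[OF e q] by (simp add: algebra_simps)
    qed
    have w'nn: "0 \<le> w' s" if "s \<in> {0..1}" for s
    proof -
      have "- (d s * d' s) \<le> \<bar>d s\<bar> * \<bar>d' s\<bar>" by (simp add: abs_mult[symmetric])
      also have "\<dots> \<le> \<bar>d s\<bar> * (L * \<bar>d s\<bar>)" using bd[OF that] by (intro mult_left_mono) auto
      also have "\<dots> = L * (d s)\<^sup>2" by (simp add: power2_eq_square)
      finally have "0 \<le> 2 * L * (d s)\<^sup>2 + 2 * d s * d' s" by linarith
      then have "0 \<le> exp (2 * L * s) * (2 * L * (d s)\<^sup>2 + 2 * d s * d' s)" by simp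
      then show ?thesis unfolding w'_def by (simp add: algebra_simps)
    qed
    have wc: "continuous_on {0..1} w" using Hw by (rule DERIV_continuous_on)
    have dc: "continuous_on {0..1} d" using Hd by (rule DERIV_continuous_on)
    have winc: "w 0 \<le> w s" if "s \<in> {0..1}" for s
    proof (cases "s = 0")
      case True then show ?thesis by simp
    next
      case False
      show ?thesis
      proof (rule DERIV_nonneg_imp_increasing_open[of 0 s w])
        show "0 \<le> s" using that by simp
        fix z assume z: "0 < z" "z < s"
        then have "z \<in> {0..1}" using that by auto
        moreover have "at z within {0..1} = at z" using z that by (intro at_within_Icc_at) auto
        ultimately show "\<exists>y. (w has_real_derivative y) (at z) \<and> 0 \<le> y"
          using Hw w'nn by metis
      next
        show "continuous_on {0..s} w" using that by (intro continuous_on_subset[OF wc]) auto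
      qed
    qed
    have w0: "w 0 > 0" unfolding w_def d_def using flow0 xy by simp
    have dnz: "d s \<noteq> 0" if "s \<in> {0..1}" for s
      using winc[OF that] w0 unfolding w_def by auto
    show ?thesis
    proof (rule ccontr)
      assume "\<not> X t x \<le> X t y"
      then have dt: "d t < 0" unfolding d_def by simp
      have "continuous_on {0..t} (\<lambda>s. - d s)"
        using dc t by (intro continuous_intros) (auto intro: continuous_on_subset)
      moreover have "- d 0 \<le> 0" unfolding d_def using flow0 xy by simp
      ultimately obtain s where "s \<ge> 0" "s \<le> t" "- d s = 0"
        using IVT'[of "\<lambda>s. - d s" 0 0 t] dt t by auto
      then show False using dnz[of s] t by auto
    qed
  qed
qed



lemma meas_mu: "h \<in> borel_measurable borel \<Longrightarrow> h \<in> borel_measurable (rho_meas r)"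
  unfolding rho_meas_def T_meas_def by (simp add: measurable_restrict_space1)
lemma meas_T: "h \<in> borel_measurable borel \<Longrightarrow> h \<in> borel_measurable T_meas"
  unfolding T_meas_def by (simp add: measurable_restrict_space1)
lemma space_mu: "space (rho_meas r) = {0..<2*pi}"
  unfolding rho_meas_def T_meas_def by (simp add: space_restrict_space)
lemma into_T: "f \<in> M \<rightarrow>\<^sub>M borel \<Longrightarrow> (\<forall>x\<in>space M. f x \<in> {0..<2*pi}) \<Longrightarrow> f \<in> M \<rightarrow>\<^sub>M T_meas"
  unfolding T_meas_def apply (subst measurable_cong_sets[OF refl sets_density])
  by (rule measurable_restrict_space2) (auto simp: measurable_lborel2)

lemma per_comp: "periodic2pi k \<Longrightarrow> periodic2pi (\<lambda>y. F (k y))"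
  unfolding periodic2pi_def by simp
lemma per_comp2: "periodic2pi k \<Longrightarrow> periodic2pi l \<Longrightarrow> periodic2pi (\<lambda>y. F (k y) (l y))"
  unfolding periodic2pi_def by simp

theorem lemma3p4:
  fixes \<rho> :: "real \<Rightarrow> real"
    and \<phi> X rt :: "real \<Rightarrow> real \<Rightarrow> real"
  assumes rho_smooth: "smooth_on UNIV \<rho>"
    and rho_per: "periodic2pi \<rho>"
    and rho_pos: "\<And>x. \<rho> x > 0"
    and rho_prob: "(\<integral>x. \<rho> x \<partial>T_meas) = 1"
    and phi_smooth: "smooth_on ({0..1} \<times> UNIV) (\<lambda>(t, x). \<phi> t x)"
    and phi_per: "\<And>t. periodic2pi (\<phi> t)"
    and flow0: "\<And>x. X 0 x = x"
    and flow: "\<And>x t. t \<in> {0..1} \<Longrightarrow>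
                 ((\<lambda>s. X s x) has_real_derivative deriv (\<phi> t) (X t x)) (at t within {0..1})"
    and rt_meas: "\<And>t. t \<in> {0..1} \<Longrightarrow> rt t \<in> borel_measurable borel"
    and rt_nonneg: "\<And>t y. t \<in> {0..1} \<Longrightarrow> rt t y \<ge> 0"
    and rt_per: "\<And>t. t \<in> {0..1} \<Longrightarrow> periodic2pi (rt t)"
    and rt_push: "\<And>t. t \<in> {0..1} \<Longrightarrow>
                   density T_meas (\<lambda>y. ennreal (rt t y)) = distr (rho_meas \<rho>) T_meas (\<lambda>x. projT (X t x))"
    and t: "t \<in> {0..1}"
    and f: "f \<in> L2_rho \<rho>" and g: "g \<in> L2_rho \<rho>"
  shows "L2_norm_rho \<rho> (\<lambda>x. Lambda \<rho> \<phi> X rt t f x - Lambda \<rho> \<phi> X rt t g x)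
           \<le> (SUP s\<in>{0..1}. SUP x. \<bar>deriv (deriv (\<phi> s)) x\<bar>) * L2_norm_rho \<rho> (\<lambda>x. f x - g x)"
proof -
  obtain P1 P2 where P2c: "continuous_on ({0..1} \<times> UNIV) P2"
    and P: "\<And>s y. s \<in> {0..1} \<Longrightarrow> (\<phi> s has_real_derivative P1 (s,y)) (at y) \<and>
          ((\<lambda>y. P1 (s,y)) has_real_derivative P2 (s,y)) (at y)"
    using phi_reg[OF phi_smooth] by blast
  define dd where "dd s = deriv (deriv (\<phi> s))" for s
  have d1: "deriv (\<phi> s) = (\<lambda>y. P1 (s,y))" if "s \<in> {0..1}" for s
    using P[OF that] by (intro ext DERIV_imp_deriv) auto
  have d2: "dd s y = P2 (s,y)" if "s \<in> {0..1}" for s y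
    unfolding dd_def d1[OF that] using P[OF that] by (intro DERIV_imp_deriv) auto
  have ddper: "periodic2pi (dd s)" for s
    unfolding dd_def by (intro deriv_per phi_per)
  obtain zB where zB: "zB \<in> {0..1} \<times> {0..2*pi}" "\<And>z. z \<in> {0..1} \<times> {0..2*pi} \<Longrightarrow> \<bar>P2 z\<bar> \<le> \<bar>P2 zB\<bar>"
  proof -
    have "\<exists>x\<in>{0..1} \<times> {0..2*pi}. \<forall>y\<in>{0..1} \<times> {0..2*pi}. \<bar>P2 y\<bar> \<le> \<bar>P2 x\<bar>"
      by (rule continuous_attains_sup)
        (auto intro!: compact_Times continuous_intros continuous_on_subset[OF P2c])
    then show ?thesis using that by blast
  qed
  define B where "B = \<bar>P2 zB\<bar>"
  have ddB: "\<bar>dd s x\<bar> \<le> B" if "s \<in> {0..1}" for s x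
  proof -
    have "dd s x = dd s (projT x)" using projT_per[OF ddper[of s]] by simp
    also have "\<dots> = P2 (s, projT x)" using d2[OF that] by simp
    finally show ?thesis unfolding B_def using zB(2)[of "(s, projT x)"] that projT_range[of x] by auto
  qed
  define M where "M = (SUP s\<in>{0..1}. SUP x. \<bar>deriv (deriv (\<phi> s)) x\<bar>)"
  have bddi: "bdd_above (range (\<lambda>x. \<bar>dd s x\<bar>))" if "s \<in> {0..1}" for s
    using ddB[OF that] by (intro bdd_aboveI) auto
  have bddo: "bdd_above ((\<lambda>s. SUP x. \<bar>dd s x\<bar>) ` {0..1})"
    using ddB by (intro bdd_aboveI[where M = B]) (auto intro!: cSUP_least)
  have hM: "\<bar>dd s x\<bar> \<le> M" if "s \<in> {0..1}" for s x
  proof -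
    have "\<bar>dd s x\<bar> \<le> (SUP x. \<bar>dd s x\<bar>)" using cSUP_upper[OF _ bddi[OF that], of x] by simp
    also have "\<dots> \<le> M" unfolding M_def dd_def[symmetric] using that bddo by (rule cSUP_upper)
    finally show ?thesis .
  qed
  have M0: "0 \<le> M" using hM[of 0 0] by simp
  have lip: "\<bar>deriv (\<phi> s) a - deriv (\<phi> s) b\<bar> \<le> M * \<bar>a - b\<bar>" if "s \<in> {0..1}" for s a b
    unfolding d1[OF that]
    by (rule lip_MVT[of _ "\<lambda>y. P2 (s,y)"]) (use P[OF that] hM[OF that] d2[OF that] in auto)
  have Xmono: "mono (X t)"
    by (rule flow_mono[where V = "\<lambda>s. deriv (\<phi> s)" and L = M]) (use flow lip flow0 t in auto)

  define \<mu> where "\<mu> = rho_meas \<rho>"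
  define r where "r = rt t"
  define a where "a = (\<integral>z. 1 / r z \<partial>T_meas)"
  define u0 where "u0 y = dd t y / r y" for y
  define rh where "rh y = 1 / (a * r y)" for y
  define cf where "cf = (\<integral>z. f z * u0 (X t z) \<partial>\<mu>)"
  define cg where "cg = (\<integral>z. g z * u0 (X t z) \<partial>\<mu>)"
  have rhat: "rho_hat (rt t) = rh" unfolding rh_def rho_hat_def a_def r_def by auto
  have Lf: "Lambda \<rho> \<phi> X rt t f x = - cf * rh (X t x)" for x
    unfolding Lambda_def rhat cf_def u0_def dd_def \<mu>_def r_def by simp
  have Lg: "Lambda \<rho> \<phi> X rt t g x = - cg * rh (X t x)" for x
    unfolding Lambda_def rhat cg_def u0_def dd_def \<mu>_def r_def by simp
  have LHS: "L2_norm_rho \<rho> (\<lambda>x. Lambda \<rho> \<phi> X rt t f x - Lambda \<rho> \<phi> X rt t g x)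
      = sqrt ((cf - cg)\<^sup>2 * (\<integral>x. (rh (X t x))\<^sup>2 \<partial>\<mu>))"
  proof -
    have "(\<integral>x. (Lambda \<rho> \<phi> X rt t f x - Lambda \<rho> \<phi> X rt t g x)\<^sup>2 \<partial>\<mu>)
        = (\<integral>x. (cf - cg)\<^sup>2 * (rh (X t x))\<^sup>2 \<partial>\<mu>)"
      unfolding Lf Lg by (rule Bochner_Integration.integral_cong) (auto simp: power2_eq_square algebra_simps)
    also have "\<dots> = (cf - cg)\<^sup>2 * (\<integral>x. (rh (X t x))\<^sup>2 \<partial>\<mu>)" by simp
    finally show ?thesis unfolding L2_norm_rho_def \<mu>_def by simp
  qed
  define Q where "Q = (\<integral>x. (f x - g x)\<^sup>2 \<partial>\<mu>)"
  have Q0: "0 \<le> Q" unfolding Q_def by simp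
  have RHS: "(SUP s\<in>{0..1}. SUP x. \<bar>deriv (deriv (\<phi> s)) x\<bar>) * L2_norm_rho \<rho> (\<lambda>x. f x - g x) = M * sqrt Q"
    unfolding M_def Q_def L2_norm_rho_def \<mu>_def ..
  have rm: "r \<in> borel_measurable borel" unfolding r_def using rt_meas[OF t] .
  have rnn: "\<And>y. 0 \<le> r y" unfolding r_def using rt_nonneg[OF t] .
  have rper: "periodic2pi r" unfolding r_def using rt_per[OF t] .
  have Xm: "X t \<in> borel_measurable borel" using Xmono by (rule borel_measurable_mono)
  have PX: "(\<lambda>x. projT (X t x)) \<in> \<mu> \<rightarrow>\<^sub>M T_meas"
    using projT_range by (intro into_T) (auto simp: \<mu>_def intro!: meas_mu measurable_compose[OF Xm projT_borel])
  have push: "density T_meas (\<lambda>y. ennreal (r y)) = distr \<mu> T_meas (\<lambda>x. projT (X t x))"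
    unfolding r_def \<mu>_def using rt_push[OF t] .
  have transfer: "(\<integral>x. k (X t x) \<partial>\<mu>) = (\<integral>y. r y * k y \<partial>T_meas)"
    if km: "k \<in> borel_measurable borel" and kp: "periodic2pi k" for k
  proof -
    have "(\<integral>x. k (X t x) \<partial>\<mu>) = (\<integral>x. k (projT (X t x)) \<partial>\<mu>)" using projT_per[OF kp] by simp
    also have "\<dots> = integral\<^sup>L (distr \<mu> T_meas (\<lambda>x. projT (X t x))) k"
      by (rule integral_distr[symmetric, OF PX meas_T[OF km]])
    also have "\<dots> = integral\<^sup>L (density T_meas (\<lambda>y. ennreal (r y))) k" using push by simp
    also have "\<dots> = (\<integral>y. r y * k y \<partial>T_meas)"
      by (subst integral_density) (auto intro!: meas_T km rm simp: rnn)
    finally show ?thesis .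
  qed
  have transfer_int: "integrable \<mu> (\<lambda>x. k (X t x)) \<longleftrightarrow> integrable T_meas (\<lambda>y. r y * k y)"
    if km: "k \<in> borel_measurable borel" and kp: "periodic2pi k" for k
  proof -
    have "integrable \<mu> (\<lambda>x. k (X t x)) \<longleftrightarrow> integrable \<mu> (\<lambda>x. k (projT (X t x)))"
      using projT_per[OF kp] by simp
    also have "\<dots> \<longleftrightarrow> integrable (distr \<mu> T_meas (\<lambda>x. projT (X t x))) k"
      by (rule integrable_distr_eq[symmetric, OF PX meas_T[OF km]])
    also have "\<dots> \<longleftrightarrow> integrable (density T_meas (\<lambda>y. ennreal (r y))) k" using push by simp
    also have "\<dots> \<longleftrightarrow> integrable T_meas (\<lambda>y. r y * k y)"
      by (subst integrable_density) (auto intro!: meas_T km rm simp: rnn)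
    finally show ?thesis .
  qed
  have a0: "0 \<le> a" unfolding a_def using rnn by (intro integral_nonneg_AE) auto
  show ?thesis
  proof (cases "a > 0")
    case False
    then have "a = 0" using a0 by simp
    then have "rh = (\<lambda>y. 0)" unfolding rh_def by auto
    then have "L2_norm_rho \<rho> (\<lambda>x. Lambda \<rho> \<phi> X rt t f x - Lambda \<rho> \<phi> X rt t g x) = 0"
      unfolding LHS by simp
    then show ?thesis unfolding RHS using M0 Q0 by simp
  next
    case True
    then have ia: "integrable T_meas (\<lambda>z. 1 / r z)" unfolding a_def
      using not_integrable_integral_eq by fastforce
    have ddt: "dd t = (\<lambda>y. P2 (t,y))" using d2[OF t] by auto
    have ddm: "dd t \<in> borel_measurable borel" unfolding ddt
      by (rule borel_measurable_continuous_onI, rule continuous_on_compose2[OF P2c])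
         (use t in \<open>auto intro!: continuous_intros\<close>)
    have u0m: "u0 \<in> borel_measurable borel" unfolding u0_def using ddm rm by measurable
    have rhm: "rh \<in> borel_measurable borel" unfolding rh_def using rm by measurable
    have u0per: "periodic2pi u0" unfolding u0_def using per_comp2[OF ddper[of t] rper, of "(/)"] by simp
    have rhper: "periodic2pi rh" unfolding rh_def using per_comp[OF rper, of "\<lambda>z. 1 / (a * z)"] by simp
    have J: "(\<integral>x. (rh (X t x))\<^sup>2 \<partial>\<mu>) = 1 / a"
    proof -
      have "(\<integral>x. (rh (X t x))\<^sup>2 \<partial>\<mu>) = (\<integral>y. r y * (rh y)\<^sup>2 \<partial>T_meas)"
        by (rule transfer) (use rhm rhper in \<open>auto intro: per_comp\<close>)
      also have "\<dots> = (\<integral>y. (1 / a\<^sup>2) * (1 / r y) \<partial>T_meas)"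
      proof (rule Bochner_Integration.integral_cong)
        fix y
        show "r y * (rh y)\<^sup>2 = (1 / a\<^sup>2) * (1 / r y)"
          by (cases "r y = 0") (auto simp: rh_def power2_eq_square field_simps)
      qed simp
      also have "\<dots> = (1 / a\<^sup>2) * a" unfolding a_def by (rule integral_mult_right_zero)
      also have "\<dots> = 1 / a" using True by (simp add: power2_eq_square)
      finally show ?thesis .
    qed
    have u2per: "periodic2pi (\<lambda>y. (u0 y)\<^sup>2)" using per_comp[OF u0per] .
    have u2m: "(\<lambda>y. (u0 y)\<^sup>2) \<in> borel_measurable borel" using u0m by measurable
    have pw: "r y * (u0 y)\<^sup>2 = (dd t y)\<^sup>2 / r y" for y
      by (cases "r y = 0") (auto simp: u0_def power2_eq_square field_simps)
    have pwb: "r y * (u0 y)\<^sup>2 \<le> M\<^sup>2 * (1 / r y)" for y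
    proof -
      have "(dd t y)\<^sup>2 = \<bar>dd t y\<bar>\<^sup>2" by simp
      also have "\<dots> \<le> M\<^sup>2" using hM[OF t, of y] by (intro power_mono) auto
      finally have "(dd t y)\<^sup>2 / r y \<le> M\<^sup>2 / r y" using rnn[of y] by (intro divide_right_mono) auto
      then show ?thesis unfolding pw by simp
    qed
    have iM: "integrable T_meas (\<lambda>y. M\<^sup>2 * (1 / r y))" using integrable_mult_right[OF ia, of "M\<^sup>2"] by simp
    have iU: "integrable T_meas (\<lambda>y. r y * (u0 y)\<^sup>2)"
    proof (rule Bochner_Integration.integrable_bound[OF iM])
      show "(\<lambda>y. r y * (u0 y)\<^sup>2) \<in> borel_measurable T_meas" by (intro meas_T borel_measurable_times rm u2m)
      show "AE y in T_meas. norm (r y * (u0 y)\<^sup>2) \<le> norm (M\<^sup>2 * (1 / r y))"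
        using pwb rnn by (intro AE_I2) (auto simp: abs_of_nonneg)
    qed
    define u where "u x = u0 (X t x)" for x
    have iu2: "integrable \<mu> (\<lambda>x. (u x)\<^sup>2)" unfolding u_def
      using transfer_int[OF u2m u2per] iU by simp
    have U: "(\<integral>x. (u x)\<^sup>2 \<partial>\<mu>) \<le> M\<^sup>2 * a"
    proof -
      have "(\<integral>x. (u x)\<^sup>2 \<partial>\<mu>) = (\<integral>y. r y * (u0 y)\<^sup>2 \<partial>T_meas)"
        unfolding u_def by (rule transfer[OF u2m u2per])
      also have "\<dots> \<le> (\<integral>y. M\<^sup>2 * (1 / r y) \<partial>T_meas)"
        by (rule integral_mono[OF iU iM pwb])
      also have "\<dots> = M\<^sup>2 * a" unfolding a_def by (rule integral_mult_right_zero)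
      finally show ?thesis .
    qed
    have um: "u \<in> borel_measurable \<mu>" unfolding u_def \<mu>_def
      by (intro meas_mu measurable_compose[OF Xm u0m])
    have fm: "f \<in> borel_measurable \<mu>" and f2: "integrable \<mu> (\<lambda>x. (f x)\<^sup>2)"
      using f unfolding L2_rho_def \<mu>_def by auto
    have gm: "g \<in> borel_measurable \<mu>" and g2: "integrable \<mu> (\<lambda>x. (g x)\<^sup>2)"
      using g unfolding L2_rho_def \<mu>_def by auto
    have pb: "\<bar>p * q\<bar> \<le> p\<^sup>2 + q\<^sup>2" for p q :: real
    proof -
      have h1: "2 * \<bar>p\<bar> * \<bar>q\<bar> \<le> p\<^sup>2 + q\<^sup>2" using sum_squares_bound[of "\<bar>p\<bar>" "\<bar>q\<bar>"] by simp
      have h2: "0 \<le> \<bar>p\<bar> * \<bar>q\<bar>" by simp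
      have "\<bar>p\<bar> * \<bar>q\<bar> \<le> p\<^sup>2 + q\<^sup>2" using h1 h2 by linarith
      then show ?thesis by (simp add: abs_mult)
    qed
    have prodint: "integrable \<mu> (\<lambda>x. v x * w x)"
      if vm: "v \<in> borel_measurable \<mu>" and wm: "w \<in> borel_measurable \<mu>"
        and v2: "integrable \<mu> (\<lambda>x. (v x)\<^sup>2)" and w2: "integrable \<mu> (\<lambda>x. (w x)\<^sup>2)" for v w :: "real \<Rightarrow> real"
    proof (rule Bochner_Integration.integrable_bound[OF Bochner_Integration.integrable_add[OF v2 w2]])
      show "(\<lambda>x. v x * w x) \<in> borel_measurable \<mu>" using vm wm by measurable
      show "AE x in \<mu>. norm (v x * w x) \<le> norm ((v x)\<^sup>2 + (w x)\<^sup>2)"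
        using pb by (intro AE_I2) auto
    qed
    have fu: "integrable \<mu> (\<lambda>x. f x * u x)" by (rule prodint[OF fm um f2 iu2])
    have gu: "integrable \<mu> (\<lambda>x. g x * u x)" by (rule prodint[OF gm um g2 iu2])
    have fg: "integrable \<mu> (\<lambda>x. f x * g x)" by (rule prodint[OF fm gm f2 g2])
    have e1: "(\<lambda>x. (f x - g x)\<^sup>2) = (\<lambda>x. (f x)\<^sup>2 - 2 * (f x * g x) + (g x)\<^sup>2)"
      by (auto simp: power2_eq_square algebra_simps)
    have fg2: "integrable \<mu> (\<lambda>x. (f x - g x)\<^sup>2)" unfolding e1 using f2 g2 fg by simp
    have e2: "(\<lambda>x. (f x - g x) * u x) = (\<lambda>x. f x * u x - g x * u x)"
      by (auto simp: algebra_simps)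
    have fgu: "integrable \<mu> (\<lambda>x. (f x - g x) * u x)" unfolding e2 using fu gu by simp
    have cfg: "cf - cg = (\<integral>x. (f x - g x) * u x \<partial>\<mu>)"
      unfolding e2 cf_def cg_def u_def[symmetric] using fu gu by simp
    have CS: "(cf - cg)\<^sup>2 \<le> Q * (\<integral>x. (u x)\<^sup>2 \<partial>\<mu>)"
      unfolding cfg Q_def by (rule CS_int[OF fg2 iu2 fgu])
    also have "\<dots> \<le> Q * (M\<^sup>2 * a)" using U Q0 by (intro mult_left_mono)
    finally have "(cf - cg)\<^sup>2 * (1 / a) \<le> Q * M\<^sup>2 * a * (1 / a)"
      using True by (intro mult_right_mono) (auto simp: algebra_simps)
    also have "\<dots> = Q * M\<^sup>2" using True by simp
    finally have "sqrt ((cf - cg)\<^sup>2 * (1 / a)) \<le> sqrt (M\<^sup>2 * Q)"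
      by (simp add: mult.commute)
    also have "\<dots> = M * sqrt Q" using M0 by (simp add: real_sqrt_mult)
    finally show ?thesis unfolding LHS RHS J .
  qed
qed


end
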